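(* Let $A>0$ and assume $\lambda_0:=A-1>0$. Fix $0<\mu_0<\lambda_0$ and $a$ with $\mu_0+1<a<\lambda_0+1$. Let $\theta\in C_b(\mathbb{R})$. Then there is $\varepsilon_0>0$ such that for any $|\varepsilon|<\varepsilon_0$ the following holds: any global nonnegative solution $u=u^\varepsilon(t,x,y)$ of $$\partial_t u=\partial_{xx}u+\partial_{yy}u+u\left(1-A^2\big(y-\varepsilon\theta(x)\big)^2-\int_{\mathbb{R}}u(t,x,y')\,dy'\right),\quad t>0,\ x,y\in\mathbb{R},$$ starting from an initial datum $u_0=u_0(x,y)$ such that $$M=M(u_0):=\sup_{(x,y)\in\mathbb{R}^2}u_0(x,y)e^{\frac12 a y^2}<+\infty,$$ satisfies $$0\le u(t,x,y)\le Me^{-\mu_0 t}e^{-\frac12 a y^2}\quad\text{for all } t\ge 0,\ x\in\mathbb{R},\ y\in\mathbb{R}.$$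
   Context: $C_b(\mathbb{R})$ denotes the bounded continuous functions on $\mathbb{R}$. The number $\lambda_0=A-1$ is the principal eigenvalue of $-\frac{d^2}{dy^2}-(1-A^2y^2)$ on $L^2(\mathbb{R})$. *)

theory Defs
  imports "HOL-Analysis.Analysis"
begin

definition is_global_solution ::
  "real \<Rightarrow> real \<Rightarrow> (real \<Rightarrow> real) \<Rightarrow> (real \<Rightarrow> real \<Rightarrow> real)
   \<Rightarrow> (real \<Rightarrow> real \<Rightarrow> real \<Rightarrow> real) \<Rightarrow> bool" where
  "is_global_solution A eps theta u0 u \<longleftrightarrow>
     continuous_on ({0..} \<times> UNIV \<times> UNIV) (\<lambda>(t, x, y). u t x y)
   \<and> (\<forall>x y. u 0 x y = u0 x y)
   \<and> (\<forall>T\<ge>0. bounded ((\<lambda>(t, x, y). u t x y) ` ({0..T} \<times> UNIV \<times> UNIV)))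
   \<and> (\<forall>t\<ge>0. \<forall>x. integrable lborel (\<lambda>y'. u t x y'))
   \<and> (\<exists>ut ux uxx uy uyy :: real \<Rightarrow> real \<Rightarrow> real \<Rightarrow> real.
        \<forall>t>0. \<forall>x y.
          ((\<lambda>s. u s x y) has_real_derivative ut t x y) (at t)
        \<and> ((\<lambda>\<xi>. u t \<xi> y) has_real_derivative ux t x y) (at x)
        \<and> ((\<lambda>\<xi>. ux t \<xi> y) has_real_derivative uxx t x y) (at x)
        \<and> ((\<lambda>\<eta>. u t x \<eta>) has_real_derivative uy t x y) (at y)
        \<and> ((\<lambda>\<eta>. uy t x \<eta>) has_real_derivative uyy t x y) (at y)
        \<and> ut t x y = uxx t x y + uyy t x y
            + u t x y * (1 - A\<^sup>2 * (y - eps * theta x)\<^sup>2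
                         - (LINT y'|lborel. u t x y')))"

end

theory Submission
  imports Defs
begin

lemma max_second_deriv:
  fixes f f' :: "real \<Rightarrow> real"
  assumes d1: "\<And>\<xi>. (f has_real_derivative f' \<xi>) (at \<xi>)"
    and d2: "(f' has_real_derivative D) (at x0)"
    and mx: "\<And>\<xi>. f \<xi> \<le> f x0"
  shows "D \<le> 0"
proof (rule ccontr)
  assume "\<not> D \<le> 0"
  hence Dp: "D > 0" by simp
  have f0: "f' x0 = 0"
    using DERIV_local_max[OF d1[of x0], of 1] mx by auto
  obtain d where d: "d > 0" "\<forall>h>0. h < d \<longrightarrow> f' x0 < f' (x0 + h)"
    using DERIV_pos_inc_right[OF d2 Dp] by blast
  obtain z where z: "x0 < z" "z < x0 + d/2" "f (x0 + d/2) - f x0 = (x0 + d/2 - x0) * f' z"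
    using MVT2[of x0 "x0 + d/2" f f'] d1 d by auto
  have "f' z > 0" using d(2)[rule_format, of "z - x0"] z f0 by auto
  hence "d * f' z > 0" using d by simp
  hence "f (x0 + d/2) > f x0" using z by simp
  thus False using mx[of "x0 + d/2"] by simp
qed

lemma max_first_deriv_left:
  fixes g :: "real \<Rightarrow> real"
  assumes d: "(g has_real_derivative D) (at t0)" and t0: "0 < t0"
    and mx: "\<And>s. 0 \<le> s \<Longrightarrow> s \<le> t0 \<Longrightarrow> g s \<le> g t0"
  shows "D \<ge> 0"
proof (rule ccontr)
  assume "\<not> D \<ge> 0"
  hence "D < 0" by simp
  then obtain e where e: "e > 0" "\<forall>h>0. h < e \<longrightarrow> g t0 < g (t0 - h)"
    using DERIV_neg_dec_left[OF d] by blast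
  define h where "h = min e t0 / 2"
  have "h > 0" "h < e" "h < t0" using e t0 by (auto simp: h_def)
  thus False using e(2) mx[of "t0 - h"] by force
qed

lemma comparison:
  fixes u ut ux uxx uy uyy :: "real \<Rightarrow> real \<Rightarrow> real \<Rightarrow> real" and c :: "real \<Rightarrow> real \<Rightarrow> real"
    and M \<mu>0 a t1 x1 y1 :: real
  assumes cont: "continuous_on ({0..} \<times> UNIV \<times> UNIV) (\<lambda>(t, x, y). u t x y)"
    and bnd: "\<forall>T\<ge>0. bounded ((\<lambda>(t, x, y). u t x y) ` ({0..T} \<times> UNIV \<times> UNIV))"
    and nonneg: "\<forall>t\<ge>0. \<forall>x y. 0 \<le> u t x y"
    and derivs: "\<forall>t>0. \<forall>x y.
          ((\<lambda>s. u s x y) has_real_derivative ut t x y) (at t)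
        \<and> ((\<lambda>\<xi>. u t \<xi> y) has_real_derivative ux t x y) (at x)
        \<and> ((\<lambda>\<xi>. ux t \<xi> y) has_real_derivative uxx t x y) (at x)
        \<and> ((\<lambda>\<eta>. u t x \<eta>) has_real_derivative uy t x y) (at y)
        \<and> ((\<lambda>\<eta>. uy t x \<eta>) has_real_derivative uyy t x y) (at y)
        \<and> ut t x y \<le> uxx t x y + uyy t x y + c x y * u t x y"
    and c1: "\<And>x y. c x y \<le> 1"
    and cw: "\<And>x y. c x y \<le> a - \<mu>0 - a\<^sup>2 * y\<^sup>2"
    and M0: "M \<ge> 0"
    and init: "\<And>x y. u 0 x y \<le> M * exp (- a * y\<^sup>2 / 2)"
    and t1ge: "t1 \<ge> 0"
  shows "u t1 x1 y1 \<le> M * exp (- \<mu>0 * t1) * exp (- a * y1\<^sup>2 / 2)"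
proof (rule ccontr)
  define w where "w = (\<lambda>t y. M * exp (- \<mu>0 * t) * exp (- a * y\<^sup>2 / 2))"
  define E where "E = (\<lambda>t::real. exp (-2 * t))"
  assume "\<not> ?thesis"
  hence gt: "u t1 x1 y1 > w t1 y1" by (simp add: w_def)
  have w0: "\<And>x y. u 0 x y \<le> w 0 y" using init by (simp add: w_def)
  have wnn: "\<And>t y. w t y \<ge> 0" using M0 by (simp add: w_def)
  have t1: "t1 > 0"
  proof (rule ccontr)
    assume "\<not> t1 > 0"
    hence "t1 = 0" using t1ge by simp
    thus False using gt w0[of x1 y1] by simp
  qed
  define \<delta> where "\<delta> = E t1 * (u t1 x1 y1 - w t1 y1)"
  have \<delta>: "\<delta> > 0" using gt by (simp add: \<delta>_def E_def)
  define \<eta> where "\<eta> = \<delta> / (2 * (x1\<^sup>2 + y1\<^sup>2 + 5 * t1 + 1))"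
  have den: "x1\<^sup>2 + y1\<^sup>2 + 5 * t1 + 1 > 0" using t1
    by (metis add_nonneg_nonneg add_pos_nonneg less_eq_real_def mult_pos_pos zero_le_power2 zero_less_numeral zero_less_one add.commute)
  have \<eta>: "\<eta> > 0" using \<delta> den by (simp add: \<eta>_def)
  define \<phi> where "\<phi> = (\<lambda>(t, x, y). E t * (u t x y - w t y) - \<eta> * (x\<^sup>2 + y\<^sup>2 + 5 * t))"
  have \<phi>1: "\<phi> (t1, x1, y1) > 0"
  proof -
    have "\<eta> * (x1\<^sup>2 + y1\<^sup>2 + 5 * t1) < \<eta> * (x1\<^sup>2 + y1\<^sup>2 + 5 * t1 + 1)" using \<eta> by simp
    also have "\<dots> = \<delta> / 2"
    proof -
      define X where "X = x1\<^sup>2 + y1\<^sup>2 + 5 * t1 + 1"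
      have "X > 0" using den by (simp add: X_def)
      moreover have "\<eta> = \<delta> / (2 * X)" by (simp add: \<eta>_def X_def)
      ultimately show ?thesis by (simp add: X_def[symmetric])
    qed
    finally show ?thesis using \<delta> by (simp add: \<phi>_def \<delta>_def)
  qed
  obtain C where C: "\<And>t x y. 0 \<le> t \<Longrightarrow> t \<le> t1 \<Longrightarrow> \<bar>u t x y\<bar> \<le> C"
  proof -
    from bnd t1 obtain C where "\<forall>z\<in>(\<lambda>(t, x, y). u t x y) ` ({0..t1} \<times> UNIV \<times> UNIV). norm z \<le> C"
      unfolding bounded_iff by force
    thus ?thesis using that by force
  qed
  have \<phi>le: "\<phi> (t, x, y) \<le> C - \<eta> * (x\<^sup>2 + y\<^sup>2)" if "0 \<le> t" "t \<le> t1" for t x y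
  proof -
    have "E t \<le> 1" "E t > 0" using that by (auto simp: E_def)
    have "E t * (u t x y - w t y) \<le> E t * u t x y"
      using wnn[of t y] \<open>E t > 0\<close> by (simp add: algebra_simps)
    also have "\<dots> \<le> 1 * u t x y" 
      using nonneg that \<open>E t \<le> 1\<close> by (intro mult_right_mono) auto
    also have "\<dots> \<le> C" using C[OF that, of x y] by simp
    finally have "E t * (u t x y - w t y) \<le> C" .
    moreover have "\<eta> * (5 * t) \<ge> 0" using \<eta> that by simp
    ultimately show ?thesis by (simp add: \<phi>_def algebra_simps)
  qed
  define R where "R = C / \<eta> + 1"
  have outside: "\<phi> (t, x, y) < 0" if "0 \<le> t" "t \<le> t1" "\<bar>x\<bar> > R \<or> \<bar>y\<bar> > R" for t x y
  proof -
    have C0: "C \<ge> 0" using C[of 0 0 0] t1 by auto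
    hence R1: "R \<ge> 1" using \<eta> by (simp add: R_def)
    have "R * R \<ge> R" using R1 by simp
    have "x\<^sup>2 + y\<^sup>2 > R * R"
    proof (cases "\<bar>x\<bar> > R")
      case True
      hence "\<bar>x\<bar> * \<bar>x\<bar> > R * R" using R1 by (intro mult_strict_mono) auto
      hence "R * R < x\<^sup>2" by (simp add: power2_eq_square)
      thus ?thesis using zero_le_power2[of y] by linarith
    next
      case False
      hence "\<bar>y\<bar> > R" using that by simp
      hence "\<bar>y\<bar> * \<bar>y\<bar> > R * R" using R1 by (intro mult_strict_mono) auto
      hence "R * R < y\<^sup>2" by (simp add: power2_eq_square)
      thus ?thesis using zero_le_power2[of x] by linarith
    qed
    hence "x\<^sup>2 + y\<^sup>2 > C / \<eta>" using \<open>R * R \<ge> R\<close> by (simp add: R_def)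
    hence "\<eta> * (x\<^sup>2 + y\<^sup>2) > C" using \<eta> by (simp add: field_simps)
    thus ?thesis using \<phi>le[OF that(1,2), of x y] by simp
  qed
  define S where "S = {0..t1} \<times> {-R..R} \<times> {-R..R}"
  have cS: "compact S" unfolding S_def by (intro compact_Times compact_Icc)
  have S1: "(t1, x1, y1) \<in> S"
    using outside[of t1 x1 y1] \<phi>1 t1 by (force simp: S_def)
  have Ssub: "S \<subseteq> {0..} \<times> UNIV \<times> UNIV" by (auto simp: S_def)
  have contS: "continuous_on S \<phi>"
  proof -
    have u: "continuous_on S (\<lambda>(t, x, y). u t x y)" using continuous_on_subset[OF cont Ssub] .
    have "\<phi> = (\<lambda>p. E (fst p) * ((\<lambda>(t, x, y). u t x y) p - w (fst p) (snd (snd p)))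
              - \<eta> * ((fst (snd p))\<^sup>2 + (snd (snd p))\<^sup>2 + 5 * fst p))" (is "_ = ?g")
      by (auto simp: \<phi>_def)
    moreover have "continuous_on S ?g" unfolding E_def w_def
      by (intro continuous_intros u) auto
    ultimately show ?thesis by simp
  qed
  obtain p where pS: "p \<in> S" and pmax: "\<And>q. q \<in> S \<Longrightarrow> \<phi> q \<le> \<phi> p"
    using continuous_attains_sup[OF cS _ contS] S1 by blast
  obtain t0 x0 y0 where p: "p = (t0, x0, y0)" by (cases p) auto
  have t0r: "0 \<le> t0" "t0 \<le> t1" using pS by (auto simp: S_def p)
  have ppos: "\<phi> p > 0" using pmax[OF S1] \<phi>1 by simp
  have gmax: "\<phi> (t, x, y) \<le> \<phi> p" if "0 \<le> t" "t \<le> t1" for t x y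
  proof (cases "(t, x, y) \<in> S")
    case True thus ?thesis using pmax by blast
  next
    case False
    hence "\<bar>x\<bar> > R \<or> \<bar>y\<bar> > R" using that by (auto simp: S_def)
    hence "\<phi> (t, x, y) < 0" using outside[OF that] by blast
    thus ?thesis using ppos by simp
  qed
  have t0: "t0 > 0"
  proof (rule ccontr)
    assume "\<not> t0 > 0"
    hence "t0 = 0" using t0r by simp
    moreover have "\<eta> * (x0\<^sup>2 + y0\<^sup>2) \<ge> 0" using \<eta> by simp
    ultimately have "\<phi> p \<le> 0" using w0[of x0 y0] by (simp add: p \<phi>_def E_def)
    thus False using ppos by simp
  qed
  define U where "U = u t0 x0 y0"
  define W where "W = w t0 y0"
  define Et where "Et = E t0"
  have Et: "Et > 0" by (simp add: Et_def E_def)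
  have posv: "Et * (U - W) > 0"
  proof -
    have "\<eta> * (x0\<^sup>2 + y0\<^sup>2 + 5 * t0) \<ge> 0" using \<eta> t0 by simp
    thus ?thesis using ppos by (simp add: p \<phi>_def U_def W_def Et_def)
  qed
  have D: "((\<lambda>s. u s x0 y0) has_real_derivative ut t0 x0 y0) (at t0)"
       "\<And>\<xi>. ((\<lambda>\<xi>. u t0 \<xi> y0) has_real_derivative ux t0 \<xi> y0) (at \<xi>)"
       "((\<lambda>\<xi>. ux t0 \<xi> y0) has_real_derivative uxx t0 x0 y0) (at x0)"
       "\<And>\<zeta>. ((\<lambda>\<eta>. u t0 x0 \<eta>) has_real_derivative uy t0 x0 \<zeta>) (at \<zeta>)"
       "((\<lambda>\<eta>. uy t0 x0 \<eta>) has_real_derivative uyy t0 x0 y0) (at y0)"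
       "ut t0 x0 y0 \<le> uxx t0 x0 y0 + uyy t0 x0 y0 + c x0 y0 * u t0 x0 y0"
    using derivs t0 by blast+
  have dt: "((\<lambda>s. \<phi> (s, x0, y0)) has_real_derivative
      (-2 * Et * (U - W) + Et * (ut t0 x0 y0 + \<mu>0 * W) - 5 * \<eta>)) (at t0)"
    unfolding \<phi>_def E_def w_def U_def W_def Et_def
    by (auto intro!: derivative_eq_intros D(1) simp: algebra_simps)
  have Tc: "-2 * Et * (U - W) + Et * (ut t0 x0 y0 + \<mu>0 * W) - 5 * \<eta> \<ge> 0"
    by (rule max_first_deriv_left[OF dt t0]) (use gmax t0r in \<open>auto simp: p\<close>)
  have Xc: "Et * uxx t0 x0 y0 - 2 * \<eta> \<le> 0"
  proof (rule max_second_deriv[where f = "\<lambda>\<xi>. \<phi> (t0, \<xi>, y0)" and f' = "\<lambda>\<xi>. Et * ux t0 \<xi> y0 - 2 * \<eta> * \<xi>"])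
    show "((\<lambda>\<xi>. \<phi> (t0, \<xi>, y0)) has_real_derivative Et * ux t0 \<xi> y0 - 2 * \<eta> * \<xi>) (at \<xi>)" for \<xi>
      unfolding \<phi>_def Et_def
      by (auto intro!: derivative_eq_intros D(2) simp: algebra_simps)
    show "((\<lambda>\<xi>. Et * ux t0 \<xi> y0 - 2 * \<eta> * \<xi>) has_real_derivative Et * uxx t0 x0 y0 - 2 * \<eta>) (at x0)"
      by (auto intro!: derivative_eq_intros D(3))
    show "\<phi> (t0, \<xi>, y0) \<le> \<phi> (t0, x0, y0)" for \<xi> using gmax t0r p by simp
  qed
  have Yc: "Et * (uyy t0 x0 y0 + a * W - a\<^sup>2 * y0\<^sup>2 * W) - 2 * \<eta> \<le> 0"
  proof (rule max_second_deriv[where f = "\<lambda>\<zeta>. \<phi> (t0, x0, \<zeta>)" and f' = "\<lambda>\<zeta>. Et * (uy t0 x0 \<zeta> + a * \<zeta> * w t0 \<zeta>) - 2 * \<eta> * \<zeta>"])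
    show "((\<lambda>\<zeta>. \<phi> (t0, x0, \<zeta>)) has_real_derivative Et * (uy t0 x0 \<zeta> + a * \<zeta> * w t0 \<zeta>) - 2 * \<eta> * \<zeta>) (at \<zeta>)" for \<zeta>
      unfolding \<phi>_def Et_def w_def
      by (auto intro!: derivative_eq_intros D(4) simp: algebra_simps)
    show "((\<lambda>\<zeta>. Et * (uy t0 x0 \<zeta> + a * \<zeta> * w t0 \<zeta>) - 2 * \<eta> * \<zeta>) has_real_derivative Et * (uyy t0 x0 y0 + a * W - a\<^sup>2 * y0\<^sup>2 * W) - 2 * \<eta>) (at y0)"
      unfolding w_def W_def
      by (auto intro!: derivative_eq_intros D(5) simp: algebra_simps power2_eq_square)
    show "\<phi> (t0, x0, \<zeta>) \<le> \<phi> (t0, x0, y0)" for \<zeta> using gmax t0r p by simp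
  qed
  have P: "Et * ut t0 x0 y0 \<le> Et * uxx t0 x0 y0 + Et * uyy t0 x0 y0 + Et * c x0 y0 * U"
    using mult_left_mono[OF D(6), of Et] Et by (simp add: U_def algebra_simps)
  have cU: "Et * c x0 y0 * U = c x0 y0 * (Et * (U - W)) + Et * c x0 y0 * W" by (simp add: algebra_simps)
  have c1': "c x0 y0 * (Et * (U - W)) \<le> Et * (U - W)"
    using mult_right_mono[OF c1[of x0 y0], of "Et * (U - W)"] posv by simp
  have cw': "Et * c x0 y0 * W \<le> Et * (a - \<mu>0 - a\<^sup>2 * y0\<^sup>2) * W"
    using mult_right_mono[OF mult_left_mono[OF cw[of x0 y0], of Et], of W] Et wnn[of t0 y0]
    by (simp add: W_def)
  have "Et * ut t0 x0 y0 \<le> 4 * \<eta> + Et * (U - W) - Et * \<mu>0 * W"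
    using P cU c1' cw' Xc Yc by (simp add: algebra_simps)
  hence "\<eta> + Et * (U - W) \<le> 0" using Tc by (simp add: algebra_simps)
  thus False using \<eta> posv by simp
qed

theorem mainTheorem1:
  fixes A \<mu>0 a :: real and \<theta> :: "real \<Rightarrow> real"
  assumes "A > 0"
    and "A - 1 > 0"
    and "0 < \<mu>0" and "\<mu>0 < A - 1"
    and "\<mu>0 + 1 < a" and "a < (A - 1) + 1"
    and "continuous_on UNIV \<theta>" and "bounded (range \<theta>)"
  shows "\<exists>\<epsilon>0>0. \<forall>\<epsilon>::real. \<bar>\<epsilon>\<bar> < \<epsilon>0 \<longrightarrow>
           (\<forall>(u0 :: real \<Rightarrow> real \<Rightarrow> real) (u :: real \<Rightarrow> real \<Rightarrow> real \<Rightarrow> real).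
              is_global_solution A \<epsilon> \<theta> u0 u
              \<and> (\<forall>t\<ge>0. \<forall>x y. 0 \<le> u t x y)
              \<and> bdd_above ((\<lambda>(x, y). u0 x y * exp (a * y\<^sup>2 / 2)) ` UNIV)
              \<longrightarrow> (let M = (SUP (x, y)\<in>UNIV. u0 x y * exp (a * y\<^sup>2 / 2)) in
                   \<forall>t\<ge>0. \<forall>x y. 0 \<le> u t x y \<and>
                      u t x y \<le> M * exp (- \<mu>0 * t) * exp (- a * y\<^sup>2 / 2)))"
proof -
  obtain B0 where B0: "\<forall>z\<in>range \<theta>. norm z \<le> B0" using assms(8) unfolding bounded_iff by blast
  define B where "B = \<bar>B0\<bar>"
  have B: "\<And>x. (\<theta> x)\<^sup>2 \<le> B\<^sup>2" "B \<ge> 0"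
  proof -
    fix x have "\<bar>\<theta> x\<bar> \<le> B" using B0 unfolding B_def by (metis abs_ge_self order_trans rangeI real_norm_def)
    thus "(\<theta> x)\<^sup>2 \<le> B\<^sup>2" by (metis abs_ge_zero order_trans power2_abs power_mono)
  qed (simp add: B_def)
  define c0 where "c0 = a - 1 - \<mu>0"
  define d where "d = A\<^sup>2 - a\<^sup>2"
  have c0: "c0 > 0" using assms by (simp add: c0_def)
  have apos: "a > 0" using assms by simp
  have d: "d > 0" unfolding d_def using assms apos
    by (simp add: power_strict_mono)
  define K where "K = c0 * d / (A\<^sup>2 * a\<^sup>2 * (B\<^sup>2 + 1))"
  have Kp: "K > 0" using c0 d apos assms(1) unfolding K_def
    by (intro divide_pos_pos mult_pos_pos) (auto intro: add_nonneg_pos)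
  define \<epsilon>0 where "\<epsilon>0 = min 1 K"
  have e0: "\<epsilon>0 > 0" "\<epsilon>0 \<le> 1" "\<epsilon>0 \<le> K" using Kp by (auto simp: \<epsilon>0_def)
  have poly: "1 - A\<^sup>2 * (y - \<epsilon> * \<theta> x)\<^sup>2 \<le> a - \<mu>0 - a\<^sup>2 * y\<^sup>2" if "\<bar>\<epsilon>\<bar> < \<epsilon>0" for \<epsilon> x y
  proof -
    define s where "s = \<epsilon> * \<theta> x"
    have "\<epsilon>\<^sup>2 \<le> \<epsilon>0" 
    proof -
      have "\<epsilon>\<^sup>2 = \<bar>\<epsilon>\<bar> * \<bar>\<epsilon>\<bar>" by (simp add: power2_eq_square)
      also have "\<dots> \<le> \<epsilon>0 * 1" using that e0 by (intro mult_mono) auto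
      finally show ?thesis by simp
    qed
    hence eK: "\<epsilon>\<^sup>2 \<le> K" using e0 by simp
    have "s\<^sup>2 = \<epsilon>\<^sup>2 * (\<theta> x)\<^sup>2" by (simp add: s_def power_mult_distrib)
    also have "\<dots> \<le> K * (B\<^sup>2 + 1)" using eK B(1)[of x] Kp by (intro mult_mono) auto
    finally have s2: "s\<^sup>2 \<le> K * (B\<^sup>2 + 1)" .
    have "A\<^sup>2 * a\<^sup>2 * s\<^sup>2 \<le> A\<^sup>2 * a\<^sup>2 * (K * (B\<^sup>2 + 1))" using s2 by (intro mult_left_mono) auto
    also have "\<dots> = c0 * d" using assms(1) apos add_nonneg_pos[OF zero_le_power2[of B], of 1] by (simp add: K_def)
    finally have s3: "A\<^sup>2 * a\<^sup>2 * s\<^sup>2 \<le> c0 * d" .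
    have id: "d * (A\<^sup>2 * (y - s)\<^sup>2 - a\<^sup>2 * y\<^sup>2) + A\<^sup>2 * a\<^sup>2 * s\<^sup>2 = (d * y - A\<^sup>2 * s)\<^sup>2"
      by (simp add: d_def power2_eq_square algebra_simps)
    have "0 \<le> (d * y - A\<^sup>2 * s)\<^sup>2" by simp
    hence "d * (A\<^sup>2 * (y - s)\<^sup>2 - a\<^sup>2 * y\<^sup>2) \<ge> - (c0 * d)"
      using id s3 by linarith
    hence "d * (A\<^sup>2 * (y - s)\<^sup>2 - a\<^sup>2 * y\<^sup>2) \<ge> d * (- c0)" by (simp add: mult.commute)
    hence "A\<^sup>2 * (y - s)\<^sup>2 - a\<^sup>2 * y\<^sup>2 \<ge> - c0" using d mult_le_cancel_left_pos by blast
    thus ?thesis by (simp add: s_def c0_def)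
  qed
  show ?thesis
  proof (intro exI[of _ \<epsilon>0] conjI allI impI e0(1))
    fix \<epsilon> :: real and u0 :: "real \<Rightarrow> real \<Rightarrow> real" and u :: "real \<Rightarrow> real \<Rightarrow> real \<Rightarrow> real"
    assume e: "\<bar>\<epsilon>\<bar> < \<epsilon>0"
    assume H: "is_global_solution A \<epsilon> \<theta> u0 u \<and> (\<forall>t\<ge>0. \<forall>x y. 0 \<le> u t x y)
              \<and> bdd_above ((\<lambda>(x, y). u0 x y * exp (a * y\<^sup>2 / 2)) ` UNIV)"
    define M where "M = (SUP (x, y)\<in>UNIV. u0 x y * exp (a * y\<^sup>2 / 2))"
    have nonneg: "\<forall>t\<ge>0. \<forall>x y. 0 \<le> u t x y" using H[THEN conjunct2, THEN conjunct1] .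
    have G: "is_global_solution A \<epsilon> \<theta> u0 u" using H[THEN conjunct1] .
    have bdd: "bdd_above ((\<lambda>(x, y). u0 x y * exp (a * y\<^sup>2 / 2)) ` UNIV)" using H[THEN conjunct2, THEN conjunct2] .
    have Mge: "u0 x y * exp (a * y\<^sup>2 / 2) \<le> M" for x y
      unfolding M_def using cSUP_upper[OF _ bdd, of "(x, y)"] by simp
    have cont: "continuous_on ({0..} \<times> UNIV \<times> UNIV) (\<lambda>(t, x, y). u t x y)"
      and ini: "\<forall>x y. u 0 x y = u0 x y"
      and bnd: "\<forall>T\<ge>0. bounded ((\<lambda>(t, x, y). u t x y) ` ({0..T} \<times> UNIV \<times> UNIV))"
      and integ: "\<forall>t\<ge>0. \<forall>x. integrable lborel (\<lambda>y'. u t x y')"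
      using G unfolding is_global_solution_def by blast+
    obtain ut ux uxx uy uyy :: "real \<Rightarrow> real \<Rightarrow> real \<Rightarrow> real" where DD: "\<forall>t>0. \<forall>x y.
          ((\<lambda>s. u s x y) has_real_derivative ut t x y) (at t)
        \<and> ((\<lambda>\<xi>. u t \<xi> y) has_real_derivative ux t x y) (at x)
        \<and> ((\<lambda>\<xi>. ux t \<xi> y) has_real_derivative uxx t x y) (at x)
        \<and> ((\<lambda>\<eta>. u t x \<eta>) has_real_derivative uy t x y) (at y)
        \<and> ((\<lambda>\<eta>. uy t x \<eta>) has_real_derivative uyy t x y) (at y)
        \<and> ut t x y = uxx t x y + uyy t x y
            + u t x y * (1 - A\<^sup>2 * (y - \<epsilon> * \<theta> x)\<^sup>2
                         - (LINT y'|lborel. u t x y'))"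
      using G unfolding is_global_solution_def by blast
    define c where "c = (\<lambda>x y. 1 - A\<^sup>2 * (y - \<epsilon> * \<theta> x)\<^sup>2)"
    have derivs: "\<forall>t>0. \<forall>x y.
          ((\<lambda>s. u s x y) has_real_derivative ut t x y) (at t)
        \<and> ((\<lambda>\<xi>. u t \<xi> y) has_real_derivative ux t x y) (at x)
        \<and> ((\<lambda>\<xi>. ux t \<xi> y) has_real_derivative uxx t x y) (at x)
        \<and> ((\<lambda>\<eta>. u t x \<eta>) has_real_derivative uy t x y) (at y)
        \<and> ((\<lambda>\<eta>. uy t x \<eta>) has_real_derivative uyy t x y) (at y)
        \<and> ut t x y \<le> uxx t x y + uyy t x y + c x y * u t x y"
    proof (intro allI impI)
      fix t x y :: real assume t: "t > 0"
      have I: "(LINT y'|lborel. u t x y') \<ge> 0" by (rule integral_nonneg_AE) (use nonneg t in auto)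
      have I2: "u t x y * (LINT y'|lborel. u t x y') \<ge> 0" using I nonneg t by simp
      note Dx = DD[rule_format, OF t, of x y]
      have eq: "ut t x y = uxx t x y + uyy t x y
            + u t x y * (1 - A\<^sup>2 * (y - \<epsilon> * \<theta> x)\<^sup>2
                         - (LINT y'|lborel. u t x y'))" using Dx by blast
      have "ut t x y \<le> uxx t x y + uyy t x y + c x y * u t x y"
        unfolding eq c_def using I2 by (simp add: algebra_simps)
      thus "((\<lambda>s. u s x y) has_real_derivative ut t x y) (at t)
        \<and> ((\<lambda>\<xi>. u t \<xi> y) has_real_derivative ux t x y) (at x)
        \<and> ((\<lambda>\<xi>. ux t \<xi> y) has_real_derivative uxx t x y) (at x)
        \<and> ((\<lambda>\<eta>. u t x \<eta>) has_real_derivative uy t x y) (at y)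
        \<and> ((\<lambda>\<eta>. uy t x \<eta>) has_real_derivative uyy t x y) (at y)
        \<and> ut t x y \<le> uxx t x y + uyy t x y + c x y * u t x y"
        using Dx by blast
    qed
    have c1: "c x y \<le> 1" for x y by (simp add: c_def)
    have cw: "c x y \<le> a - \<mu>0 - a\<^sup>2 * y\<^sup>2" for x y using poly[OF e] by (simp add: c_def)
    have M0: "M \<ge> 0"
    proof -
      have "0 \<le> u0 0 0" using nonneg ini by (metis order_refl)
      thus ?thesis using Mge[of 0 0] by simp
    qed
    have init: "u 0 x y \<le> M * exp (- a * y\<^sup>2 / 2)" for x y
    proof -
      have "u 0 x y = u0 x y * exp (a * y\<^sup>2 / 2) * exp (- a * y\<^sup>2 / 2)"
        using ini by (simp add: mult.assoc exp_add[symmetric])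
      also have "\<dots> \<le> M * exp (- a * y\<^sup>2 / 2)" using Mge by (intro mult_right_mono) auto
      finally show ?thesis .
    qed
    show "let M = (SUP (x, y)\<in>UNIV. u0 x y * exp (a * y\<^sup>2 / 2)) in
                   \<forall>t\<ge>0. \<forall>x y. 0 \<le> u t x y \<and>
                      u t x y \<le> M * exp (- \<mu>0 * t) * exp (- a * y\<^sup>2 / 2)"
      unfolding Let_def M_def[symmetric]
      using comparison[OF cont bnd nonneg derivs c1 cw M0 init] nonneg by blast
  qed
qed

end
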